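(* Let $Q=(I,E)$ be a symmetric quiver with an even number of edges between any two different vertices and an odd number of loops at every vertex, and let $(d,v)\in\mathbb{N}^I\times\mathbb{Z}$. Then $S^d_v$ consists of the partitions $(d_i)_{i=1}^k$ of $d$ such that $v\cdot\underline{d_i}/\underline{d}\in\mathbb{Z}$ for all $1\le i\le k$. In particular, if $\gcd(v,\underline d)=1$ then $S^d_v$ contains only the one-term partition of $d$.
   Context: For $e=(e^i)\in\mathbb{N}^I$, $\underline e=\sum_ie^i$. $R(d)=\bigoplus_{(i\to j)\in E}\mathrm{Hom}(V^i,V^j)$, $\dim V^i=d^i$, $G(d)=\prod GL(V^i)$, Lie algebra $\mathfrak{g}(d)$, diagonal torus $T(d)$ with weights $\beta^i_a$, $\tau_d=\frac1{\underline d}\sum_{i,a}\beta^i_a$. For a cocharacter $\lambda$ of $T(d)$, $n_\lambda=\langle\lambda,\det(R(d)^\vee)^{\lambda>0}\rangle-\langle\lambda,\det(\mathfrak{g}(d)^\vee)^{\lambda>0}\rangle$, where $V^{\lambda>0}$ is the span of weights pairing positively with $\lambda$. A partition of $d$ is a collection of nonzero $d_1,\dots,d_k\in\mathbb{N}^I$ with sum $d$; a cocharacter $\lambda$ has associated partition $(d_j)$ if the $j$-th distinct value of $\langle\lambda,\beta^i_a\rangle$ occurs $d^i_j$ times for each $i$. $S^d_v$ is the set of partitions of $d$ such that $n_\lambda/2+\langle\lambda,v\tau_d\rangle\in\mathbb{Z}$ for every cocharacter $\lambda$ with that associated partition. *)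

theory Defs
  imports Complex_Main
begin

text \<open>Quiver Q = (I,E): the vertex set I is a finite type 'i; the edges are recorded by
  their multiplicities: e i j = number of arrows i -> j.  The diagonal torus T(d) has weights
  beta^i_a, for i in I and a < d i (0-based).  A cocharacter lambda of T(d) is
  given by the integers lam i a = <lambda, beta^i_a> (for a < d i; other values are irrelevant).\<close>

definition dtot :: "('i::finite \<Rightarrow> nat) \<Rightarrow> nat" where
  "dtot d = (\<Sum>i\<in>UNIV. d i)"

text \<open><lambda, det(W^vee)^{lambda>0}>: sum of the positive pairings <lambda,w> over the weights w
  (with multiplicity) of W^vee.  Weights of R(d)^vee: beta^i_a - beta^j_b for each arrow i -> j;
  weights of g(d)^vee: beta^i_a - beta^i_b.\<close>

definition pospart :: "int \<Rightarrow> int" where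
  "pospart x = max x 0"

definition n_lambda :: "('i::finite \<Rightarrow> 'i \<Rightarrow> nat) \<Rightarrow> ('i \<Rightarrow> nat) \<Rightarrow> ('i \<Rightarrow> nat \<Rightarrow> int) \<Rightarrow> int" where
  "n_lambda e d lam =
     (\<Sum>i\<in>UNIV. \<Sum>j\<in>UNIV. int (e i j) * (\<Sum>a<d i. \<Sum>b<d j. pospart (lam i a - lam j b)))
   - (\<Sum>i\<in>UNIV. \<Sum>a<d i. \<Sum>b<d i. pospart (lam i a - lam i b))"

definition pair_vtau :: "('i::finite \<Rightarrow> nat) \<Rightarrow> int \<Rightarrow> ('i \<Rightarrow> nat \<Rightarrow> int) \<Rightarrow> real" where
  "pair_vtau d v lam = real_of_int v / real (dtot d) * real_of_int (\<Sum>i\<in>UNIV. \<Sum>a<d i. lam i a)"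

definition is_partition :: "('i::finite \<Rightarrow> nat) \<Rightarrow> ('i \<Rightarrow> nat) list \<Rightarrow> bool" where
  "is_partition d p \<longleftrightarrow> (\<forall>c\<in>set p. \<exists>i. c i \<noteq> 0) \<and> (\<forall>i. (\<Sum>c\<leftarrow>p. c i) = d i)"

definition cochar_values :: "('i::finite \<Rightarrow> nat) \<Rightarrow> ('i \<Rightarrow> nat \<Rightarrow> int) \<Rightarrow> int set" where
  "cochar_values d lam = {lam i a | i a. a < d i}"

definition assoc_partition :: "('i::finite \<Rightarrow> nat) \<Rightarrow> ('i \<Rightarrow> nat \<Rightarrow> int) \<Rightarrow> ('i \<Rightarrow> nat) list" where
  "assoc_partition d lam =
     map (\<lambda>c. \<lambda>i. card {a. a < d i \<and> lam i a = c}) (sorted_list_of_set (cochar_values d lam))"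

definition S_set :: "('i::finite \<Rightarrow> 'i \<Rightarrow> nat) \<Rightarrow> ('i \<Rightarrow> nat) \<Rightarrow> int \<Rightarrow> ('i \<Rightarrow> nat) list set" where
  "S_set e d v = {p. is_partition d p \<and>
      (\<forall>lam. assoc_partition d lam = p \<longrightarrow>
         real_of_int (n_lambda e d lam) / 2 + pair_vtau d v lam \<in> \<int>)}"

end

theory Submission
  imports Defs
begin

lemma n_even:
  assumes even_edges: "\<And>i j. i \<noteq> j \<Longrightarrow> even (e i j)"
    and odd_loops: "\<And>i. odd (e i i)"
  shows "even (n_lambda e d lam)"
proof -
  define P where "P i j = (\<Sum>a<d i. \<Sum>b<d j. pospart (lam i a - lam j b))" for i j
  have "n_lambda e d lam = (\<Sum>i\<in>UNIV. \<Sum>j\<in>UNIV. int (e i j) * P i j) - (\<Sum>i\<in>UNIV. P i i)"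
    unfolding n_lambda_def P_def by simp
  also have "\<dots> = (\<Sum>i\<in>UNIV. (\<Sum>j\<in>UNIV. int (e i j) * P i j) - P i i)"
    by (simp add: sum_subtractf)
  also have "\<dots> = (\<Sum>i\<in>UNIV. \<Sum>j\<in>UNIV. (int (e i j) - (if j = i then 1 else 0)) * P i j)"
  proof (rule sum.cong[OF refl])
    fix i :: 'a
    have "(\<Sum>j\<in>UNIV. (int (e i j) - (if j = i then 1 else 0)) * P i j)
        = (\<Sum>j\<in>UNIV. int (e i j) * P i j) - (\<Sum>j\<in>UNIV. (if j = i then P i j else 0))"
    proof -
      have "(\<lambda>j. (int (e i j) - (if j = i then 1 else 0)) * P i j) = (\<lambda>j. int (e i j) * P i j - (if j = i then P i j else 0))"
        by (auto simp: algebra_simps)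
      then show ?thesis by (simp only: sum_subtractf)
    qed
    also have "(\<Sum>j\<in>UNIV. (if j = i then P i j else 0)) = P i i" by simp
    finally show "(\<Sum>j\<in>UNIV. int (e i j) * P i j) - P i i = (\<Sum>j\<in>UNIV. (int (e i j) - (if j = i then 1 else 0)) * P i j)" by simp
  qed
  also have "even \<dots>"
  proof (intro dvd_sum)
    fix i j :: 'a
    show "even ((int (e i j) - (if j = i then 1 else 0)) * P i j)"
    proof (cases "j = i")
      case True then show ?thesis using odd_loops[of i] by simp
    next
      case False then show ?thesis using even_edges[of i j] by simp
    qed
  qed
  finally show ?thesis .
qed

lemma sum_group:
  fixes d :: "'i::finite \<Rightarrow> nat"
  shows "(\<Sum>i\<in>UNIV. \<Sum>a<d i. lam i a) =
    (\<Sum>c\<in>cochar_values d lam. c * int (dtot (\<lambda>i. card {a. a < d i \<and> lam i a = c})))"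
proof -
  let ?V = "cochar_values d lam"
  have fin: "finite ?V"
  proof -
    have "?V = (\<Union>i. (lam i) ` {..<d i})" unfolding cochar_values_def by auto
    then show ?thesis by simp
  qed
  have "\<And>i. (\<Sum>a<d i. lam i a) = (\<Sum>c\<in>?V. c * int (card {a. a < d i \<and> lam i a = c}))"
  proof -
    fix i
    have "(\<Sum>a<d i. lam i a) = (\<Sum>a<d i. \<Sum>c\<in>?V. if lam i a = c then c else 0)"
    proof (rule sum.cong[OF refl])
      fix a assume "a \<in> {..<d i}"
      then have "lam i a \<in> ?V" unfolding cochar_values_def by auto
      then show "lam i a = (\<Sum>c\<in>?V. if lam i a = c then c else 0)"
        using fin by (simp add: sum.delta)
    qed
    also have "\<dots> = (\<Sum>c\<in>?V. \<Sum>a<d i. if lam i a = c then c else 0)"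
      by (rule sum.swap)
    also have "\<dots> = (\<Sum>c\<in>?V. c * int (card {a. a < d i \<and> lam i a = c}))"
    proof (rule sum.cong[OF refl])
      fix c
      have "(\<Sum>a<d i. if lam i a = c then c else 0) = (\<Sum>a\<in>{a. a < d i \<and> lam i a = c}. c)"
        by (rule sum.mono_neutral_cong_right) auto
      then show "(\<Sum>a<d i. if lam i a = c then c else 0) = c * int (card {a. a < d i \<and> lam i a = c})"
        by (simp add: mult.commute)
    qed
    finally show "(\<Sum>a<d i. lam i a) = (\<Sum>c\<in>?V. c * int (card {a. a < d i \<and> lam i a = c}))" .
  qed
  then have "(\<Sum>i\<in>UNIV. \<Sum>a<d i. lam i a) = (\<Sum>i\<in>UNIV. \<Sum>c\<in>?V. c * int (card {a. a < d i \<and> lam i a = c}))"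
    by simp
  also have "\<dots> = (\<Sum>c\<in>?V. \<Sum>i\<in>UNIV. c * int (card {a. a < d i \<and> lam i a = c}))"
    by (rule sum.swap)
  also have "\<dots> = (\<Sum>c\<in>?V. c * int (dtot (\<lambda>i. card {a. a < d i \<and> lam i a = c})))"
    by (simp add: dtot_def sum_distrib_left)
  finally show ?thesis .
qed

lemma my_sum_list_concat: "sum_list (concat xss) = sum_list (map sum_list (xss :: int list list))"
  by (induct xss) auto

definition blk :: "('i \<Rightarrow> nat) list \<Rightarrow> (nat \<Rightarrow> int) \<Rightarrow> 'i \<Rightarrow> int list" where
  "blk p g i = concat (map (\<lambda>j. replicate ((p!j) i) (g j)) [0..<length p])"

lemma sorted_map_g:
  assumes "strict_mono (g :: nat \<Rightarrow> int)"
  shows "sorted_list_of_set (g ` {..<n}) = map g [0..<n]"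
proof -
  have "sorted_wrt (<) (map g [0..<n])"
    using assms by (auto simp: sorted_wrt_map strict_mono_def sorted_wrt_iff_nth_less)
  moreover have "set (map g [0..<n]) = g ` {..<n}" by auto
  moreover have "length (map g [0..<n]) = card (g ` {..<n})"
    using assms by (simp add: card_image strict_mono_imp_inj_on)
  ultimately show ?thesis
    by (subst sorted_list_of_set_unique[symmetric]) auto
qed

lemma construct:
  fixes d :: "'i::finite \<Rightarrow> nat" and g :: "nat \<Rightarrow> int"
  assumes part: "is_partition d p" and g: "strict_mono g"
  shows "\<exists>lam. assoc_partition d lam = p \<and>
     (\<Sum>i\<in>UNIV. \<Sum>a<d i. lam i a) = (\<Sum>j<length p. g j * int (dtot (p!j)))"
proof -
  let ?n = "length p"
  define lam where "lam i a = blk p g i ! a" for i a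
  have len: "length (blk p g i) = d i" for i
  proof -
    have "length (blk p g i) = (\<Sum>j<?n. (p!j) i)"
      by (simp add: blk_def length_concat comp_def sum_list_sum_nth atLeast0LessThan)
    also have "\<dots> = (\<Sum>c\<leftarrow>p. c i)"
      by (simp add: sum_list_sum_nth atLeast0LessThan)
    also have "\<dots> = d i" using part unfolding is_partition_def by auto
    finally show ?thesis .
  qed
  have setblk: "set (blk p g i) = g ` {j. j < ?n \<and> (p!j) i \<noteq> 0}" for i
    by (auto simp: blk_def)
  have vals: "cochar_values d lam = g ` {..<?n}"
  proof -
    have "cochar_values d lam = (\<Union>i. set (blk p g i))"
      unfolding cochar_values_def lam_def using len by (auto simp: in_set_conv_nth; blast)
    also have "\<dots> = g ` {..<?n}"
    proof
      show "(\<Union>i. set (blk p g i)) \<subseteq> g ` {..<?n}" using setblk by auto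
      show "g ` {..<?n} \<subseteq> (\<Union>i. set (blk p g i))"
      proof
        fix x assume "x \<in> g ` {..<?n}"
        then obtain j where j: "j < ?n" "x = g j" by auto
        then have "p!j \<in> set p" by simp
        then obtain i where "(p!j) i \<noteq> 0" using part unfolding is_partition_def by auto
        then show "x \<in> (\<Union>i. set (blk p g i))" using setblk j by auto
      qed
    qed
    finally show ?thesis .
  qed
  have cnt: "card {a. a < d i \<and> lam i a = g j} = (p!j) i" if "j < ?n" for i j
  proof -
    have "card {a. a < d i \<and> lam i a = g j} = length (filter (\<lambda>x. x = g j) (blk p g i))"
      by (simp add: length_filter_conv_card len lam_def)
    also have "\<dots> = (\<Sum>j'<?n. if g j' = g j then (p!j') i else 0)"
      by (simp add: blk_def length_concat comp_def filter_concat filter_replicate sum_list_sum_nth atLeast0LessThan if_distrib cong: if_cong)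
    also have "\<dots> = (\<Sum>j'<?n. if j' = j then (p!j') i else 0)"
      using strict_mono_eq[OF g] by simp
    also have "\<dots> = (p!j) i" using that by simp
    finally show ?thesis .
  qed
  have ap: "assoc_partition d lam = p"
    unfolding assoc_partition_def vals sorted_map_g[OF g]
    by (rule nth_equalityI) (auto simp: cnt)
  have "(\<Sum>i\<in>UNIV. \<Sum>a<d i. lam i a) = (\<Sum>i\<in>UNIV. \<Sum>j<?n. g j * int ((p!j) i))"
  proof (rule sum.cong[OF refl])
    fix i
    have "(\<Sum>a<d i. lam i a) = sum_list (blk p g i)"
      by (simp add: sum_list_sum_nth atLeast0LessThan len lam_def)
    also have "\<dots> = (\<Sum>j<?n. g j * int ((p!j) i))"
      unfolding blk_def my_sum_list_concat
      by (simp add: comp_def sum_set_upt_conv_sum_list_nat[symmetric] atLeast0LessThan sum_list_replicate mult.commute)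
    finally show "(\<Sum>a<d i. lam i a) = (\<Sum>j<?n. g j * int ((p!j) i))" .
  qed
  also have "\<dots> = (\<Sum>j<?n. g j * int (dtot (p!j)))"
    by (subst sum.swap) (simp add: dtot_def sum_distrib_left)
  finally show ?thesis using ap by blast
qed

lemma fin_vals: "finite (cochar_values (d :: 'i::finite \<Rightarrow> nat) lam)"
proof -
  have "cochar_values d lam = (\<Union>i. (lam i) ` {..<d i})" unfolding cochar_values_def by auto
  then show ?thesis by simp
qed

lemma half_int: "even (n::int) \<Longrightarrow> real_of_int n / 2 \<in> \<int>"
  by (elim evenE) simp

lemma pair_int:
  assumes even_edges: "\<And>i j. i \<noteq> j \<Longrightarrow> even (e i j)"
    and odd_loops: "\<And>i. odd (e i i)"
    and "p \<in> S_set e d v" "assoc_partition d lam = p"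
  shows "pair_vtau d v lam \<in> \<int>"
proof -
  have "real_of_int (n_lambda e d lam) / 2 + pair_vtau d v lam \<in> \<int>"
    using assms(3,4) unfolding S_set_def by auto
  moreover have "real_of_int (n_lambda e d lam) / 2 \<in> \<int>"
    by (rule half_int[OF n_even[OF even_edges odd_loops]]) auto
  ultimately show ?thesis
    by (metis Ints_diff add_diff_cancel_left')
qed

lemma tail_diff:
  fixes t :: "nat \<Rightarrow> int"
  assumes "j < n"
  shows "(\<Sum>l<n. (int l + (if j \<le> l then 1 else 0)) * t l)
       - (\<Sum>l<n. (int l + (if Suc j \<le> l then 1 else 0)) * t l) = t j"
proof -
  have "(\<Sum>l<n. (int l + (if j \<le> l then 1 else 0)) * t l)
       - (\<Sum>l<n. (int l + (if Suc j \<le> l then 1 else 0)) * t l)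
      = (\<Sum>l<n. (int l + (if j \<le> l then 1 else 0)) * t l - (int l + (if Suc j \<le> l then 1 else 0)) * t l)"
    by (simp add: sum_subtractf)
  also have "\<dots> = (\<Sum>l<n. if l = j then t l else 0)"
    by (rule sum.cong) (auto simp: algebra_simps)
  also have "\<dots> = t j" using assms by simp
  finally show ?thesis .
qed

theorem proposition8p5:
  fixes e :: "'i::finite \<Rightarrow> 'i \<Rightarrow> nat" and d :: "'i \<Rightarrow> nat" and v :: int
  assumes sym: "\<And>i j. e i j = e j i"
    and even_edges: "\<And>i j. i \<noteq> j \<Longrightarrow> even (e i j)"
    and odd_loops: "\<And>i. odd (e i i)"
  shows "S_set e d v = {p. is_partition d p \<and>
            (\<forall>c\<in>set p. real_of_int v * real (dtot c) / real (dtot d) \<in> \<int>)}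
         \<and> (gcd v (int (dtot d)) = 1 \<and> (\<exists>i. d i \<noteq> 0) \<longrightarrow> S_set e d v = {[d]})"
proof -
  let ?D = "real (dtot d)"
  have A: "S_set e d v = {p. is_partition d p \<and>
            (\<forall>c\<in>set p. real_of_int v * real (dtot c) / real (dtot d) \<in> \<int>)}"
  proof (intro set_eqI iffI)
    fix p assume pS: "p \<in> S_set e d v"
    then have part: "is_partition d p" unfolding S_set_def by auto
    let ?n = "length p"
    define t where "t l = int (dtot (p!l))" for l
    define gm where "gm m l = int l + (if m \<le> l then 1 else 0)" for m l :: nat
    have Tint: "real_of_int v / ?D * real_of_int (\<Sum>l<?n. gm m l * t l) \<in> \<int>" for m
    proof -
      have "strict_mono (gm m)" unfolding gm_def strict_mono_def by auto
      from construct[OF part this] obtain lam where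
        "assoc_partition d lam = p" "(\<Sum>i\<in>UNIV. \<Sum>a<d i. lam i a) = (\<Sum>l<?n. gm m l * t l)"
        unfolding t_def by auto
      with pair_int[OF even_edges odd_loops pS] show ?thesis
        unfolding pair_vtau_def by metis
    qed
    have "\<forall>c\<in>set p. real_of_int v * real (dtot c) / ?D \<in> \<int>"
    proof
      fix c assume "c \<in> set p"
      then obtain j where j: "j < ?n" "c = p!j" by (auto simp: in_set_conv_nth)
      have "real_of_int v / ?D * real_of_int (\<Sum>l<?n. gm j l * t l)
          - real_of_int v / ?D * real_of_int (\<Sum>l<?n. gm (Suc j) l * t l) \<in> \<int>"
        using Tint by (intro Ints_diff)
      also have "real_of_int v / ?D * real_of_int (\<Sum>l<?n. gm j l * t l)
          - real_of_int v / ?D * real_of_int (\<Sum>l<?n. gm (Suc j) l * t l)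
          = real_of_int v / ?D * real_of_int ((\<Sum>l<?n. gm j l * t l) - (\<Sum>l<?n. gm (Suc j) l * t l))"
        by (simp add: right_diff_distrib)
      also have "\<dots> = real_of_int v / ?D * real_of_int (t j)"
        unfolding gm_def using tail_diff[OF j(1)] by simp
      also have "\<dots> = real_of_int v * real (dtot c) / ?D"
        using j by (simp add: t_def)
      finally show "real_of_int v * real (dtot c) / ?D \<in> \<int>" .
    qed
    then show "p \<in> {p. is_partition d p \<and>
            (\<forall>c\<in>set p. real_of_int v * real (dtot c) / real (dtot d) \<in> \<int>)}"
      using part by auto
  next
    fix p assume "p \<in> {p. is_partition d p \<and>
            (\<forall>c\<in>set p. real_of_int v * real (dtot c) / real (dtot d) \<in> \<int>)}"
    then have part: "is_partition d p" and cint: "\<And>c. c \<in> set p \<Longrightarrow> real_of_int v * real (dtot c) / ?D \<in> \<int>"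
      by auto
    have "real_of_int (n_lambda e d lam) / 2 + pair_vtau d v lam \<in> \<int>"
      if ap: "assoc_partition d lam = p" for lam
    proof -
      let ?V = "cochar_values d lam"
      let ?cnt = "\<lambda>c. \<lambda>i. card {a. a < d i \<and> lam i a = c}"
      have inp: "?cnt c \<in> set p" if "c \<in> ?V" for c
        using that ap fin_vals[of d lam] unfolding assoc_partition_def by auto
      have "pair_vtau d v lam = real_of_int v / ?D * real_of_int (\<Sum>c\<in>?V. c * int (dtot (?cnt c)))"
        unfolding pair_vtau_def sum_group ..
      also have "\<dots> = (\<Sum>c\<in>?V. real_of_int c * (real_of_int v * real (dtot (?cnt c)) / ?D))"
        by (simp add: sum_distrib_left algebra_simps)
      also have "\<dots> \<in> \<int>"
        by (intro Ints_sum Ints_mult cint inp) auto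
      finally have "pair_vtau d v lam \<in> \<int>" .
      moreover have "real_of_int (n_lambda e d lam) / 2 \<in> \<int>"
        by (rule half_int[OF n_even[OF even_edges odd_loops]]) auto
      ultimately show ?thesis by (simp add: Ints_add)
    qed
    then show "p \<in> S_set e d v" using part unfolding S_set_def by auto
  qed
  have B: "S_set e d v = {[d]}" if g: "gcd v (int (dtot d)) = 1" and nz: "\<exists>i. d i \<noteq> 0"
  proof -
    have Dpos: "dtot d > 0"
    proof -
      from nz obtain i where "d i \<noteq> 0" by blast
      moreover have "d i \<le> sum d UNIV" by (rule member_le_sum) auto
      ultimately show ?thesis unfolding dtot_def by linarith
    qed
    have "p = [d]" if pS: "p \<in> S_set e d v" for p
    proof -
      from pS A have part: "is_partition d p"
        and cint: "\<And>c. c \<in> set p \<Longrightarrow> real_of_int v * real (dtot c) / ?D \<in> \<int>" by auto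
      have sumd: "(\<Sum>c\<leftarrow>p. c i) = d i" for i using part unfolding is_partition_def by auto
      have eqD: "dtot c = dtot d" if c: "c \<in> set p" for c
      proof -
        obtain k where k: "real_of_int v * real (dtot c) / ?D = real_of_int k"
          using cint[OF c] Ints_cases by metis
        then have "real_of_int (v * int (dtot c)) = real_of_int (k * int (dtot d))"
          using Dpos by (simp add: field_simps)
        then have "v * int (dtot c) = k * int (dtot d)" by linarith
        then have "int (dtot d) dvd v * int (dtot c)" by simp
        then have "int (dtot d) dvd int (dtot c)"
          using g by (metis coprime_dvd_mult_right_iff gcd.commute coprime_iff_gcd_eq_1)
        then have dv: "dtot d dvd dtot c" by simp
        have "c i \<le> d i" for i
        proof -
          have "c i \<le> (\<Sum>c'\<leftarrow>p. c' i)" using c by (simp add: member_le_sum_list)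
          then show ?thesis using sumd by simp
        qed
        then have le: "dtot c \<le> dtot d" unfolding dtot_def by (simp add: sum_mono)
        have "dtot c > 0"
        proof -
          from c part obtain i where "c i \<noteq> 0" unfolding is_partition_def by blast
          moreover have "c i \<le> sum c UNIV" by (rule member_le_sum) auto
          ultimately show ?thesis unfolding dtot_def by linarith
        qed
        with dv le show ?thesis by (simp add: dvd_imp_le le_antisym)
      qed
      have "(\<Sum>c\<leftarrow>p. dtot c) = dtot d"
      proof -
        have "(\<Sum>c\<leftarrow>p. dtot c) = (\<Sum>i\<in>UNIV. \<Sum>c\<leftarrow>p. c i)"
          unfolding dtot_def by (induct p) (auto simp: sum.distrib)
        then show ?thesis using sumd by (simp add: dtot_def)
      qed
      also have "(\<Sum>c\<leftarrow>p. dtot c) = length p * dtot d"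
        using eqD by (induct p) auto
      finally have "length p = 1" using Dpos by simp
      then obtain c where pc: "p = [c]" by (cases p) auto
      then have "c = d" using sumd by auto
      then show ?thesis using pc by simp
    qed
    moreover have "[d] \<in> S_set e d v"
      unfolding A is_partition_def using nz Dpos by auto
    ultimately show ?thesis by blast
  qed
  show ?thesis
  proof (intro conjI impI)
    show "S_set e d v = {p. is_partition d p \<and>
            (\<forall>c\<in>set p. real_of_int v * real (dtot c) / real (dtot d) \<in> \<int>)}" by (rule A)
  next
    assume "gcd v (int (dtot d)) = 1 \<and> (\<exists>i. d i \<noteq> 0)"
    then show "S_set e d v = {[d]}" by (intro B) auto
  qed
qed

end
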